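(* For every connected graph $G$, $2\,\mathrm{GP}(G)$ is an integer; that is, $\mathrm{GP}(G)$ is either an integer or half of an (odd) integer.
   Context: All graphs are simple and finite. For a connected graph $G$, $d_G(u,v)$ denotes the shortest-path distance and $\mathrm{Aut}(G)$ the automorphism group. The Graovac-Pisanski index is $$\mathrm{GP}(G)=\frac{|V(G)|}{2|\mathrm{Aut}(G)|}\sum_{u\in V(G)}\sum_{\alpha\in \mathrm{Aut}(G)} d_G(u,\alpha(u)).$$ *)

theory Defs
  imports Complex_Main
begin

definition simple_graph :: "'a set \<Rightarrow> ('a \<Rightarrow> 'a \<Rightarrow> bool) \<Rightarrow> bool" where
  "simple_graph V E \<longleftrightarrow> finite V \<and> (\<forall>u v. E u v \<longrightarrow> u \<in> V \<and> v \<in> V)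
     \<and> (\<forall>u. \<not> E u u) \<and> (\<forall>u v. E u v \<longrightarrow> E v u)"

definition is_walk :: "'a set \<Rightarrow> ('a \<Rightarrow> 'a \<Rightarrow> bool) \<Rightarrow> 'a list \<Rightarrow> bool" where
  "is_walk V E ps \<longleftrightarrow> ps \<noteq> [] \<and> set ps \<subseteq> V \<and>
     (\<forall>i. Suc i < length ps \<longrightarrow> E (ps ! i) (ps ! Suc i))"

definition connected_graph :: "'a set \<Rightarrow> ('a \<Rightarrow> 'a \<Rightarrow> bool) \<Rightarrow> bool" where
  "connected_graph V E \<longleftrightarrow> V \<noteq> {} \<and>
     (\<forall>u\<in>V. \<forall>v\<in>V. \<exists>ps. is_walk V E ps \<and> hd ps = u \<and> last ps = v)"

definition gdist :: "'a set \<Rightarrow> ('a \<Rightarrow> 'a \<Rightarrow> bool) \<Rightarrow> 'a \<Rightarrow> 'a \<Rightarrow> nat" where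
  "gdist V E u v = (LEAST n. \<exists>ps. is_walk V E ps \<and> hd ps = u \<and> last ps = v \<and> length ps = Suc n)"

text \<open>Automorphism group: permutations of V preserving adjacency (in both directions),
  normalised to be the identity outside V so that Aut is a finite set.\<close>

definition Aut :: "'a set \<Rightarrow> ('a \<Rightarrow> 'a \<Rightarrow> bool) \<Rightarrow> ('a \<Rightarrow> 'a) set" where
  "Aut V E = {\<alpha>. bij_betw \<alpha> V V \<and> (\<forall>x. x \<notin> V \<longrightarrow> \<alpha> x = x) \<and>
     (\<forall>u\<in>V. \<forall>v\<in>V. E u v \<longleftrightarrow> E (\<alpha> u) (\<alpha> v))}"

definition GP :: "'a set \<Rightarrow> ('a \<Rightarrow> 'a \<Rightarrow> bool) \<Rightarrow> real" where
  "GP V E = real (card V) / (2 * real (card (Aut V E))) *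
     (\<Sum>u\<in>V. \<Sum>\<alpha>\<in>Aut V E. real (gdist V E u (\<alpha> u)))"

end

theory Submission
  imports Defs
begin

context
  fixes V :: "'a set" and E :: "'a \<Rightarrow> 'a \<Rightarrow> bool"
  assumes sg: "simple_graph V E"
begin

lemma finV: "finite V" using sg by (simp add: simple_graph_def)

lemma aut_V: "\<alpha> \<in> Aut V E \<Longrightarrow> u \<in> V \<Longrightarrow> \<alpha> u \<in> V"
  unfolding Aut_def by (auto dest: bij_betwE)

lemma id_aut: "id \<in> Aut V E"
  unfolding Aut_def by auto

lemma comp_aut: "\<alpha> \<in> Aut V E \<Longrightarrow> \<beta> \<in> Aut V E \<Longrightarrow> \<alpha> \<circ> \<beta> \<in> Aut V E"
  unfolding Aut_def
  apply (auto intro: bij_betw_trans)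
  apply (metis bij_betwE)+
  done

lemma inv_aut:
  assumes a: "\<alpha> \<in> Aut V E"
  shows "\<exists>\<beta>\<in>Aut V E. \<forall>x\<in>V. \<beta> (\<alpha> x) = x \<and> \<alpha> (\<beta> x) = x"
proof -
  have bij: "bij_betw \<alpha> V V" and out: "\<forall>x. x \<notin> V \<longrightarrow> \<alpha> x = x"
    and adj: "\<forall>u\<in>V. \<forall>v\<in>V. E u v \<longleftrightarrow> E (\<alpha> u) (\<alpha> v)"
    using a unfolding Aut_def by auto
  define \<beta> where "\<beta> x = (if x \<in> V then inv_into V \<alpha> x else x)" for x
  have img: "\<alpha> ` V = V" using bij by (simp add: bij_betw_def)
  have inj: "inj_on \<alpha> V" using bij by (simp add: bij_betw_def)
  have b1: "\<beta> (\<alpha> x) = x" if "x \<in> V" for x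
    using that inj img by (auto simp: \<beta>_def inv_into_f_f)
  have b2: "\<alpha> (\<beta> x) = x" if "x \<in> V" for x
    using that img by (auto simp: \<beta>_def f_inv_into_f)
  have bV: "\<beta> x \<in> V" if "x \<in> V" for x
    using that img by (auto simp: \<beta>_def inv_into_into)
  have bijb: "bij_betw \<beta> V V"
  proof -
    have "bij_betw (inv_into V \<alpha>) V V" using bij_betw_inv_into[OF bij] .
    then show ?thesis by (rule bij_betw_cong[THEN iffD1, rotated]) (simp add: \<beta>_def)
  qed
  have "\<beta> \<in> Aut V E"
    unfolding Aut_def
  proof (intro CollectI conjI bijb allI impI ballI)
    fix x assume "x \<notin> V" then show "\<beta> x = x" by (simp add: \<beta>_def)
  next
    fix u v assume "u \<in> V" "v \<in> V"
    then show "E u v = E (\<beta> u) (\<beta> v)"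
      using adj bV b2 by metis
  qed
  then show ?thesis using b1 b2 by blast
qed

lemma fin_aut: "finite (Aut V E)"
proof -
  define S where "S = {f. \<forall>x. (x \<in> V \<longrightarrow> f x \<in> V) \<and> (x \<notin> V \<longrightarrow> f x = undefined)}"
  have "finite S" unfolding S_def using finite_set_of_finite_funs[OF finV finV] .
  moreover have "Aut V E \<subseteq> (\<lambda>g x. if x \<in> V then g x else x) ` S"
  proof
    fix \<alpha> assume a: "\<alpha> \<in> Aut V E"
    let ?g = "\<lambda>x. if x \<in> V then \<alpha> x else undefined"
    have g: "?g \<in> S" using aut_V[OF a] by (auto simp: S_def)
    have eq: "(\<lambda>x. if x \<in> V then ?g x else x) = \<alpha>"
    proof (rule ext)
      fix x show "(if x \<in> V then ?g x else x) = \<alpha> x"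
        using a unfolding Aut_def by (cases "x \<in> V") auto
    qed
    show "\<alpha> \<in> (\<lambda>g x. if x \<in> V then g x else x) ` S"
      by (rule image_eqI[where f="\<lambda>g x. if x \<in> V then g x else x" and x="?g", OF eq[symmetric] g])
  qed
  ultimately show ?thesis by (rule finite_surj)
qed

lemma walk_map:
  assumes a: "\<alpha> \<in> Aut V E" and w: "is_walk V E ps"
  shows "is_walk V E (map \<alpha> ps)"
proof -
  have sV: "set ps \<subseteq> V" and ne: "ps \<noteq> []"
    and st: "\<forall>i. Suc i < length ps \<longrightarrow> E (ps ! i) (ps ! Suc i)"
    using w by (auto simp: is_walk_def)
  have adj: "\<forall>u\<in>V. \<forall>v\<in>V. E u v \<longleftrightarrow> E (\<alpha> u) (\<alpha> v)" using a by (auto simp: Aut_def)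
  show ?thesis unfolding is_walk_def
  proof (intro conjI allI impI)
    show "map \<alpha> ps \<noteq> []" using ne by simp
    show "set (map \<alpha> ps) \<subseteq> V" using sV aut_V[OF a] by auto
    fix i assume i: "Suc i < length (map \<alpha> ps)"
    then have "ps ! i \<in> V" "ps ! Suc i \<in> V" using sV by auto
    then show "E (map \<alpha> ps ! i) (map \<alpha> ps ! Suc i)"
      using st adj i by auto
  qed
qed

lemma dist_pres1:
  assumes a: "\<alpha> \<in> Aut V E"
    and "\<exists>ps. is_walk V E ps \<and> hd ps = u \<and> last ps = v \<and> length ps = Suc n"
  shows "\<exists>ps. is_walk V E ps \<and> hd ps = \<alpha> u \<and> last ps = \<alpha> v \<and> length ps = Suc n"
proof -
  obtain ps where "is_walk V E ps" "hd ps = u" "last ps = v" "length ps = Suc n"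
    using assms by blast
  moreover have "ps \<noteq> []" using calculation by (auto simp: is_walk_def)
  ultimately show ?thesis using walk_map[OF a]
    by (intro exI[of _ "map \<alpha> ps"]) (auto simp: hd_map last_map)
qed

lemma dist_pres:
  assumes a: "\<alpha> \<in> Aut V E" and u: "u \<in> V" and v: "v \<in> V"
  shows "gdist V E (\<alpha> u) (\<alpha> v) = gdist V E u v"
proof -
  obtain \<beta> where b: "\<beta> \<in> Aut V E" "\<forall>x\<in>V. \<beta> (\<alpha> x) = x \<and> \<alpha> (\<beta> x) = x"
    using inv_aut[OF a] by blast
  have "(\<lambda>n. \<exists>ps. is_walk V E ps \<and> hd ps = \<alpha> u \<and> last ps = \<alpha> v \<and> length ps = Suc n)
      = (\<lambda>n. \<exists>ps. is_walk V E ps \<and> hd ps = u \<and> last ps = v \<and> length ps = Suc n)"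
  proof (rule ext, rule iffI)
    fix n assume "\<exists>ps. is_walk V E ps \<and> hd ps = \<alpha> u \<and> last ps = \<alpha> v \<and> length ps = Suc n"
    from dist_pres1[OF b(1) this] show "\<exists>ps. is_walk V E ps \<and> hd ps = u \<and> last ps = v \<and> length ps = Suc n"
      using b(2) u v by simp
  next
    fix n assume "\<exists>ps. is_walk V E ps \<and> hd ps = u \<and> last ps = v \<and> length ps = Suc n"
    from dist_pres1[OF a this] show "\<exists>ps. is_walk V E ps \<and> hd ps = \<alpha> u \<and> last ps = \<alpha> v \<and> length ps = Suc n" .
  qed
  then show ?thesis unfolding gdist_def by simp
qed

definition orb :: "'a \<Rightarrow> 'a set" where
  "orb u = (\<lambda>\<alpha>. \<alpha> u) ` Aut V E"

definition fib :: "'a \<Rightarrow> 'a \<Rightarrow> ('a \<Rightarrow> 'a) set" where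
  "fib u v = {\<alpha> \<in> Aut V E. \<alpha> u = v}"

definition DD :: "'a \<Rightarrow> nat" where
  "DD u = (\<Sum>v\<in>orb u. gdist V E u v)"

lemma orb_fin: "finite (orb u)" using fin_aut by (simp add: orb_def)

lemma orb_sub: "u \<in> V \<Longrightarrow> orb u \<subseteq> V" using aut_V by (auto simp: orb_def)

lemma orb_self: "u \<in> orb u"
  unfolding orb_def by (rule image_eqI[where x=id]) (simp_all add: id_aut)

lemma orb_comp: "\<alpha> \<in> Aut V E \<Longrightarrow> \<gamma> \<in> Aut V E \<Longrightarrow> \<alpha> (\<gamma> u) \<in> orb u"
  unfolding orb_def by (rule image_eqI[where x="\<alpha> \<circ> \<gamma>"]) (simp_all add: comp_aut)

lemma orb_eq: assumes "w \<in> orb u" shows "orb w = orb u"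
proof -
  obtain \<gamma> where g: "\<gamma> \<in> Aut V E" "w = \<gamma> u" using assms by (auto simp: orb_def)
  show ?thesis
  proof
    show "orb w \<subseteq> orb u" using g orb_comp by (auto simp: orb_def)
  next
    show "orb u \<subseteq> orb w"
    proof
      fix x assume "x \<in> orb u"
      then obtain \<alpha> where al: "\<alpha> \<in> Aut V E" "x = \<alpha> u" by (auto simp: orb_def)
      show "x \<in> orb w"
      proof (cases "u \<in> V")
        case True
        obtain \<beta> where b: "\<beta> \<in> Aut V E" "\<forall>x\<in>V. \<beta> (\<gamma> x) = x \<and> \<gamma> (\<beta> x) = x"
          using inv_aut[OF g(1)] by blast
        have "(\<alpha> \<circ> \<beta>) w = x" using b True g al by simp
        then show ?thesis using orb_comp[OF al(1) b(1), of w] by simp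
      next
        case False
        then have "x = u" "w = u" using al g by (auto simp: Aut_def)
        then show ?thesis using orb_self by simp
      qed
    qed
  qed
qed

lemma out_fix: "\<alpha> \<in> Aut V E \<Longrightarrow> x \<notin> V \<Longrightarrow> \<alpha> x = x"
  by (simp add: Aut_def)

lemma fib_card:
  assumes u: "u \<in> V" and v: "v \<in> orb u"
  shows "card (fib u v) = card (fib u u)"
proof -
  obtain \<gamma> where g: "\<gamma> \<in> Aut V E" "v = \<gamma> u" using v by (auto simp: orb_def)
  obtain \<beta> where b: "\<beta> \<in> Aut V E" "\<forall>x\<in>V. \<beta> (\<gamma> x) = x \<and> \<gamma> (\<beta> x) = x"
    using inv_aut[OF g(1)] by blast
  have "bij_betw (\<lambda>\<alpha>. \<gamma> \<circ> \<alpha>) (fib u u) (fib u v)"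
  proof (rule bij_betw_byWitness[where f' = "\<lambda>\<alpha>. \<beta> \<circ> \<alpha>"])
    show "\<forall>a\<in>fib u u. \<beta> \<circ> (\<gamma> \<circ> a) = a"
    proof
      fix a assume "a \<in> fib u u"
      then have "a \<in> Aut V E" by (simp add: fib_def)
      then have "\<forall>x. \<beta> (\<gamma> (a x)) = a x"
        using b g aut_V out_fix by (metis)
      then show "\<beta> \<circ> (\<gamma> \<circ> a) = a" by auto
    qed
    show "\<forall>a\<in>fib u v. \<gamma> \<circ> (\<beta> \<circ> a) = a"
    proof
      fix a assume "a \<in> fib u v"
      then have "a \<in> Aut V E" by (simp add: fib_def)
      then have "\<forall>x. \<gamma> (\<beta> (a x)) = a x"
        using b g aut_V out_fix by (metis)
      then show "\<gamma> \<circ> (\<beta> \<circ> a) = a" by auto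
    qed
    show "(\<lambda>\<alpha>. \<gamma> \<circ> \<alpha>) ` fib u u \<subseteq> fib u v"
      using g comp_aut by (auto simp: fib_def)
    show "(\<lambda>\<alpha>. \<beta> \<circ> \<alpha>) ` fib u v \<subseteq> fib u u"
      using b g comp_aut u by (auto simp: fib_def)
  qed
  then show ?thesis by (simp add: bij_betw_same_card)
qed

lemma orbit_stab:
  assumes u: "u \<in> V"
  shows "card (Aut V E) = card (orb u) * card (fib u u)"
proof -
  have "card (Aut V E) = (\<Sum>\<alpha>\<in>Aut V E. 1::nat)" by simp
  also have "\<dots> = (\<Sum>y\<in>orb u. \<Sum>\<alpha>\<in>{x \<in> Aut V E. x u = y}. 1)"
    using sum.image_gen[OF fin_aut, of "\<lambda>_. 1::nat" "\<lambda>\<alpha>. \<alpha> u"] by (simp add: orb_def)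
  also have "\<dots> = (\<Sum>y\<in>orb u. card (fib u y))" by (simp add: fib_def)
  also have "\<dots> = (\<Sum>y\<in>orb u. card (fib u u))" using fib_card[OF u] by simp
  finally show ?thesis by simp
qed

lemma sum_alpha:
  assumes u: "u \<in> V"
  shows "(\<Sum>\<alpha>\<in>Aut V E. gdist V E u (\<alpha> u)) = card (fib u u) * DD u"
proof -
  have "(\<Sum>\<alpha>\<in>Aut V E. gdist V E u (\<alpha> u))
      = (\<Sum>y\<in>orb u. \<Sum>\<alpha>\<in>{x \<in> Aut V E. x u = y}. gdist V E u (\<alpha> u))"
    using sum.image_gen[OF fin_aut, of "\<lambda>\<alpha>. gdist V E u (\<alpha> u)" "\<lambda>\<alpha>. \<alpha> u"] by (simp add: orb_def)
  also have "\<dots> = (\<Sum>y\<in>orb u. card (fib u y) * gdist V E u y)"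
    by (intro sum.cong refl) (simp add: fib_def)
  also have "\<dots> = (\<Sum>y\<in>orb u. card (fib u u) * gdist V E u y)"
    using fib_card[OF u] by simp
  finally show ?thesis by (simp add: DD_def sum_distrib_left)
qed

lemma DD_eq:
  assumes u: "u \<in> V" and w: "w \<in> orb u"
  shows "DD w = DD u"
proof -
  obtain \<gamma> where g: "\<gamma> \<in> Aut V E" "w = \<gamma> u" using w by (auto simp: orb_def)
  have ow: "orb w = orb u" using orb_eq[OF w] .
  have inj: "inj_on \<gamma> (orb u)"
    using g orb_sub[OF u] by (auto simp: Aut_def bij_betw_def intro: inj_on_subset)
  have im: "\<gamma> ` orb u = orb u"
  proof -
    have "\<gamma> ` orb u \<subseteq> orb u" using g orb_comp by (auto simp: orb_def)
    moreover have "card (\<gamma> ` orb u) = card (orb u)" using card_image[OF inj] .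
    ultimately show ?thesis using orb_fin by (simp add: card_subset_eq)
  qed
  have "DD w = (\<Sum>v\<in>\<gamma> ` orb u. gdist V E (\<gamma> u) v)" using ow im g by (simp add: DD_def)
  also have "\<dots> = (\<Sum>v\<in>orb u. gdist V E (\<gamma> u) (\<gamma> v))" using sum.reindex[OF inj] by simp
  also have "\<dots> = DD u" unfolding DD_def
    using dist_pres[OF g(1) u] orb_sub[OF u] by (intro sum.cong refl) auto
  finally show ?thesis .
qed

lemma main_eq:
  "2 * GP V E = real (card V) * (\<Sum>u\<in>V. real (DD u) / real (card (orb u)))"
proof -
  have pos: "card (Aut V E) > 0" using fin_aut id_aut by (auto simp: card_gt_0_iff)
  define S where "S = (\<Sum>u\<in>V. \<Sum>\<alpha>\<in>Aut V E. real (gdist V E u (\<alpha> u)))"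
  define k where "k = real (card (Aut V E))"
  have "2 * GP V E = 2 * (real (card V) / (2 * k) * S)"
    unfolding GP_def S_def k_def ..
  also have "\<dots> = real (card V) * (S / k)" by simp
  also have "S / k = (\<Sum>u\<in>V. (\<Sum>\<alpha>\<in>Aut V E. real (gdist V E u (\<alpha> u))) / k)"
    unfolding S_def by (rule sum_divide_distrib)
  also have "\<dots> = (\<Sum>u\<in>V. real (DD u) / real (card (orb u)))"
  proof (intro sum.cong refl)
    fix u assume u: "u \<in> V"
    have c: "card (fib u u) > 0" using orbit_stab[OF u] pos by simp
    have op: "card (orb u) > 0" using orbit_stab[OF u] pos by simp
    have "(\<Sum>\<alpha>\<in>Aut V E. real (gdist V E u (\<alpha> u))) = real (\<Sum>\<alpha>\<in>Aut V E. gdist V E u (\<alpha> u))"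
      by (rule of_nat_sum[symmetric])
    also have "\<dots> = real (card (fib u u)) * real (DD u)"
      unfolding sum_alpha[OF u] by (rule of_nat_mult)
    finally have e1: "(\<Sum>\<alpha>\<in>Aut V E. real (gdist V E u (\<alpha> u))) = real (card (fib u u)) * real (DD u)" .
    have e2: "k = real (card (orb u)) * real (card (fib u u))"
      unfolding k_def using orbit_stab[OF u] by simp
    show "(\<Sum>\<alpha>\<in>Aut V E. real (gdist V E u (\<alpha> u))) / k = real (DD u) / real (card (orb u))"
      unfolding e1 e2 using c op by simp
  qed
  finally show ?thesis .
qed

lemma inner_int:
  assumes "C \<in> orb ` V"
  shows "(\<Sum>u\<in>{x \<in> V. orb x = C}. real (DD u) / real (card (orb u))) \<in> \<int>"
proof -
  obtain r where r: "r \<in> V" "C = orb r" using assms by blast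
  have S: "{x \<in> V. orb x = C} = C"
  proof
    show "{x \<in> V. orb x = C} \<subseteq> C" using orb_self by blast
    show "C \<subseteq> {x \<in> V. orb x = C}"
    proof
      fix x assume x: "x \<in> C"
      have "x \<in> V" using x r orb_sub by blast
      moreover have "orb x = C" using orb_eq x r by blast
      ultimately show "x \<in> {x \<in> V. orb x = C}" by blast
    qed
  qed
  have "(\<Sum>u\<in>{x \<in> V. orb x = C}. real (DD u) / real (card (orb u)))
        = (\<Sum>u\<in>C. real (DD r) / real (card C))"
  proof (rule sum.cong)
    show "{x \<in> V. orb x = C} = C" by (rule S)
  next
    fix x assume x: "x \<in> C"
    have xo: "x \<in> orb r" using x r by blast
    have "DD x = DD r" using DD_eq[OF r(1) xo] .
    moreover have "orb x = C" using orb_eq[OF xo] r by blast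
    ultimately show "real (DD x) / real (card (orb x)) = real (DD r) / real (card C)" by simp
  qed
  also have "\<dots> = real (DD r)"
  proof -
    have "card C > 0" using orb_self[of r] r orb_fin[of r] by (auto simp: card_gt_0_iff)
    then show ?thesis by simp
  qed
  finally show ?thesis by (simp add: Ints_of_nat)
qed

lemma sum_int: "(\<Sum>u\<in>V. real (DD u) / real (card (orb u))) \<in> \<int>"
proof -
  have "(\<Sum>u\<in>V. real (DD u) / real (card (orb u)))
     = (\<Sum>C\<in>orb ` V. \<Sum>u\<in>{x \<in> V. orb x = C}. real (DD u) / real (card (orb u)))"
    by (rule sum.image_gen[OF finV])
  also have "\<dots> \<in> \<int>" by (intro Ints_sum inner_int)
  finally show ?thesis .
qed

end

theorem corollary3p3:
  fixes V :: "'a set" and E :: "'a \<Rightarrow> 'a \<Rightarrow> bool"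
  assumes "simple_graph V E" and "connected_graph V E"
  shows "2 * GP V E \<in> \<int>"
  using main_eq[OF assms(1)] sum_int[OF assms(1)]
  by (metis Ints_mult Ints_of_nat)

end
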